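(* Let $k$ be a field and for $n\ge1$ let $B_n=k[x,y]\big[(x-1)/(x^ny-1)\big]\subset k(x,y)$, where $k[x,y]$ is a polynomial ring in two variables. Then $B_n$ is degree-rigid for each $n\ge 1$, i.e. every non-negative degree function $\delta:B_n\to\mathbb{N}\cup\{-\infty\}$ satisfies $\delta(f)=0$ for all nonzero $f\in B_n$.
   Context: A degree function on an integral domain $R$ is a map $\deg:R\to\mathbb{Z}\cup\{-\infty\}$ such that $\deg r=-\infty$ iff $r=0$, $\deg(rs)=\deg r+\deg s$, and $\deg(r+s)\le\max\{\deg r,\deg s\}$; it is non-negative if its values lie in $\mathbb{N}\cup\{-\infty\}$. $R$ is degree-rigid if every non-negative degree function on $R$ is trivial (zero on all nonzero elements). *)

theory Defs
  imports "HOL-Computational_Algebra.Polynomial" "HOL-Computational_Algebra.Fraction_Field"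
begin

text \<open>Bivariate polynomials k[x,y] are modelled as 'a poly poly: the inner
variable is x, the outer variable is y. The fraction field k(x,y) is
('a poly poly) fract.\<close>

definition var_x :: "'a::field poly poly" where "var_x = [:[:0, 1:]:]"
definition var_y :: "'a::field poly poly" where "var_y = [:0, 1:]"

definition gen_B :: "nat \<Rightarrow> 'a::field poly poly fract" where
  "gen_B n = Fract (var_x - 1) (var_x ^ n * var_y - 1)"

definition B :: "nat \<Rightarrow> 'a::field poly poly fract set" where
  "B n = {poly (map_poly (\<lambda>a. Fract a 1) P) (gen_B n) | P :: 'a poly poly poly. True}"

text \<open>The value -\<infinity> at 0 is implicit: the function is only constrained on nonzero
elements (the axioms involving 0 hold trivially with deg 0 = -\<infinity>).\<close>
definition nonneg_degree_function :: "'b::idom set \<Rightarrow> ('b \<Rightarrow> int) \<Rightarrow> bool" where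
  "nonneg_degree_function R \<delta> \<longleftrightarrow>
     (\<forall>r\<in>R. r \<noteq> 0 \<longrightarrow> \<delta> r \<ge> 0) \<and>
     (\<forall>r\<in>R. \<forall>s\<in>R. r \<noteq> 0 \<longrightarrow> s \<noteq> 0 \<longrightarrow> \<delta> (r * s) = \<delta> r + \<delta> s) \<and>
     (\<forall>r\<in>R. \<forall>s\<in>R. r \<noteq> 0 \<longrightarrow> s \<noteq> 0 \<longrightarrow> r + s \<noteq> 0 \<longrightarrow> \<delta> (r + s) \<le> max (\<delta> r) (\<delta> s))"

definition degree_rigid :: "'b::idom set \<Rightarrow> bool" where
  "degree_rigid R \<longleftrightarrow>
     (\<forall>\<delta>. nonneg_degree_function R \<delta> \<longrightarrow> (\<forall>r\<in>R. r \<noteq> 0 \<longrightarrow> \<delta> r = 0))"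

end

theory Submission
  imports Defs "HOL-Computational_Algebra.Polynomial_Factorial"
begin

locale ddf =
  fixes R :: "'b::idom set" and d :: "'b \<Rightarrow> int"
  assumes one: "1 \<in> R" and neg: "x \<in> R \<Longrightarrow> -x \<in> R"
    and add: "x \<in> R \<Longrightarrow> y \<in> R \<Longrightarrow> x + y \<in> R"
    and mul: "x \<in> R \<Longrightarrow> y \<in> R \<Longrightarrow> x * y \<in> R"
    and nd: "nonneg_degree_function R d"
begin

lemma pos: "r \<in> R \<Longrightarrow> r \<noteq> 0 \<Longrightarrow> d r \<ge> 0"
  using nd unfolding nonneg_degree_function_def by blast

lemma multD: "r \<in> R \<Longrightarrow> s \<in> R \<Longrightarrow> r \<noteq> 0 \<Longrightarrow> s \<noteq> 0 \<Longrightarrow> d (r * s) = d r + d s"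
  using nd unfolding nonneg_degree_function_def by blast

lemma addD: "r \<in> R \<Longrightarrow> s \<in> R \<Longrightarrow> r \<noteq> 0 \<Longrightarrow> s \<noteq> 0 \<Longrightarrow> r + s \<noteq> 0 \<Longrightarrow> d (r + s) \<le> max (d r) (d s)"
  using nd unfolding nonneg_degree_function_def by blast

lemma d1: "d 1 = 0"
  using multD[OF one one] by simp

lemma mone: "-1 \<in> R" using neg[OF one] .

lemma dm1: "d (-1) = 0"
  using multD[OF mone mone] d1 by simp

lemma dneg: "r \<in> R \<Longrightarrow> r \<noteq> 0 \<Longrightarrow> d (-r) = d r"
  using multD[OF mone, of r] dm1 by simp

lemma unit: "r \<in> R \<Longrightarrow> s \<in> R \<Longrightarrow> r * s = 1 \<Longrightarrow> d r = 0"
proof -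
  assume a: "r \<in> R" "s \<in> R" "r * s = 1"
  then have "r \<noteq> 0" "s \<noteq> 0" by auto
  then show ?thesis using multD[OF a(1,2)] a d1 pos[OF a(1)] pos[OF a(2)] by simp
qed

lemma diffR: "x \<in> R \<Longrightarrow> y \<in> R \<Longrightarrow> x - y \<in> R"
  using add[OF _ neg] by (metis diff_conv_add_uminus)

lemma powR: "r \<in> R \<Longrightarrow> r ^ k \<in> R"
  by (induction k) (auto intro: one mul)

lemma dpow: "r \<in> R \<Longrightarrow> r \<noteq> 0 \<Longrightarrow> d (r ^ k) = int k * d r"
proof (induction k)
  case 0 then show ?case by (simp add: d1)
next
  case (Suc k)
  then show ?case using multD[OF Suc.prems(1) powR[OF Suc.prems(1), of k]]
    by (simp add: algebra_simps)
qed

lemma sub1_le: "r \<in> R \<Longrightarrow> r \<noteq> 0 \<Longrightarrow> r - 1 \<noteq> 0 \<Longrightarrow> d (r - 1) \<le> max (d r) 0"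
  using addD[OF _ mone, of r] dm1 by simp

lemma sub1_ge: "r \<in> R \<Longrightarrow> r \<noteq> 0 \<Longrightarrow> r - 1 \<noteq> 0 \<Longrightarrow> d r \<le> max (d (r - 1)) 0"
  using addD[OF add[OF _ mone] one, of r] d1 by simp

lemma main:
  fixes X Y g :: 'b and m :: nat
  defines "D \<equiv> X ^ Suc m * Y - 1"
  assumes XR: "X \<in> R" and YR: "Y \<in> R" and gR: "g \<in> R"
    and X0: "X \<noteq> 0" and Y0: "Y \<noteq> 0" and X1: "X - 1 \<noteq> 0" and D0: "D \<noteq> 0"
    and E0: "1 - X ^ m * Y \<noteq> 0"
    and E1: "g * D = X - 1"
    and E2: "(g * X ^ m * Y - 1) * D = 1 - X ^ m * Y"
  shows "d X = 0 \<and> d Y = 0 \<and> d g = 0"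
proof -
  define h where "h = g * X ^ m * Y - 1"
  have hR: "h \<in> R" unfolding h_def using gR XR YR
    by (intro diffR mul powR one)
  have DR: "D \<in> R" unfolding D_def using XR YR by (intro diffR mul powR one)
  have g0: "g \<noteq> 0" using E1 X1 by auto
  have h0: "h \<noteq> 0" using E2 E0 h_def by auto
  have a0: "d X \<ge> 0" using pos XR X0 by auto
  have b0: "d Y \<ge> 0" using pos YR Y0 by auto
  have c0: "d g \<ge> 0" using pos gR g0 by auto
  have hp: "d h \<ge> 0" using pos hR h0 by auto
  have Dp: "d D \<ge> 0" using pos DR D0 by auto
  have XmR: "X ^ m * Y \<in> R" using XR YR by (simp add: mul powR)
  have Xm0: "X ^ m * Y \<noteq> 0" using X0 Y0 by simp
  have dXm: "d (X ^ m * Y) = int m * d X + d Y"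
    using multD[OF powR[OF XR] YR] dpow[OF XR X0] X0 Y0 by simp
  have dXn1: "d (X ^ Suc m * Y) = d (X ^ Suc m) + d Y"
    by (rule multD[OF powR[OF XR] YR]) (use X0 Y0 in simp_all)
  have dXn2: "d (X ^ Suc m) = int (Suc m) * d X" by (rule dpow[OF XR X0])
  have dXn: "d (X ^ Suc m * Y) = int m * d X + d X + d Y"
    using dXn1 dXn2 by (simp add: algebra_simps)
  have ma: "int m * d X \<ge> 0" using a0 by simp
  have e1: "d g + d D = d (X - 1)" using multD[OF gR DR g0 D0] E1 by simp
  have e2: "d h + d D = d (1 - X ^ m * Y)" using multD[OF hR DR h0 D0] E2 h_def by simp
  have f1: "d (X - 1) \<le> max (d X) 0" using sub1_le[OF XR X0 X1] .
  have f2: "d (X ^ Suc m * Y) \<le> max (d D) 0"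
    unfolding D_def by (rule sub1_ge[OF mul[OF powR[OF XR] YR]]) (use D0 X0 Y0 in \<open>simp_all add: D_def\<close>)
  have f3: "d (1 - X ^ m * Y) \<le> max 0 (d (X ^ m * Y))"
    using addD[OF one neg[OF XmR]] Xm0 E0 d1 dneg[OF XmR Xm0] by simp
  have f1': "d (X - 1) \<le> d X" using f1 a0 by simp
  have f2': "d (X ^ Suc m * Y) \<le> d D \<or> d (X ^ Suc m * Y) \<le> 0"
    using f2 by (simp only: le_max_iff_disj)
  have f3': "d (1 - X ^ m * Y) \<le> 0 \<or> d (1 - X ^ m * Y) \<le> d (X ^ m * Y)"
    using f3 by (simp only: le_max_iff_disj)
  have "d X = 0"
  proof (rule ccontr)
    assume "d X \<noteq> 0"
    then have "d X > 0" using a0 by linarith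
    then show False using e1 e2 f1' f2' f3' dXn dXm c0 Dp b0 hp ma by linarith
  qed
  then show ?thesis using e1 f1' f2' dXn c0 Dp b0 ma by auto
qed

definition good where "good r \<longleftrightarrow> r \<in> R \<and> (r \<noteq> 0 \<longrightarrow> d r \<le> 0)"

lemma good_add: "good r \<Longrightarrow> good s \<Longrightarrow> good (r + s)"
proof -
  assume r: "good r" and s: "good s"
  show ?thesis
  proof (cases "r = 0 \<or> s = 0 \<or> r + s = 0")
    case True then show ?thesis using r s add unfolding good_def by auto
  next
    case False
    then have "d (r + s) \<le> max (d r) (d s)" using addD r s unfolding good_def by blast
    then show ?thesis using r s False add unfolding good_def by auto
  qed
qed

lemma good_mul: "good r \<Longrightarrow> good s \<Longrightarrow> good (r * s)"
proof -
  assume r: "good r" and s: "good s"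
  show ?thesis
  proof (cases "r = 0 \<or> s = 0")
    case True then show ?thesis using r s mul unfolding good_def by auto
  next
    case False
    then have "d (r * s) = d r + d s" using multD r s unfolding good_def by blast
    then show ?thesis using r s False mul unfolding good_def by auto
  qed
qed

end


lemma to_fract_power: "to_fract (p ^ k) = to_fract p ^ k"
  by (induction k) simp_all

lemma fract_poly_neg: "fract_poly (- P) = - fract_poly P"
  using fract_poly_diff[of 0 P] by simp

lemma B_eq: "B n = {poly (fract_poly P) (gen_B n) | P. True}"
proof -
  show ?thesis unfolding B_def by (simp add: to_fract_def[symmetric])
qed

lemma B_ddf:
  assumes "nonneg_degree_function (B n) \<delta>"
  shows "ddf (B n) \<delta>"
proof
  show "1 \<in> B n" unfolding B_eq by (rule CollectI, rule exI[of _ 1]) simp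
  show "- x \<in> B n" if "x \<in> B n" for x
  proof -
    from that obtain P where "x = poly (fract_poly P) (gen_B n)" unfolding B_eq by auto
    then have "-x = poly (fract_poly (-P)) (gen_B n)" by (simp add: fract_poly_neg)
    then show ?thesis unfolding B_eq by blast
  qed
  show "x + y \<in> B n" if "x \<in> B n" "y \<in> B n" for x y
  proof -
    from that obtain P Q where "x = poly (fract_poly P) (gen_B n)" "y = poly (fract_poly Q) (gen_B n)"
      unfolding B_eq by auto
    then have "x + y = poly (fract_poly (P + Q)) (gen_B n)" by simp
    then show ?thesis unfolding B_eq by blast
  qed
  show "x * y \<in> B n" if "x \<in> B n" "y \<in> B n" for x y
  proof -
    from that obtain P Q where "x = poly (fract_poly P) (gen_B n)" "y = poly (fract_poly Q) (gen_B n)"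
      unfolding B_eq by auto
    then have "x * y = poly (fract_poly (P * Q)) (gen_B n)" by simp
    then show ?thesis unfolding B_eq by blast
  qed
qed (fact assms)

lemma const_B: "to_fract p \<in> B n"
  unfolding B_eq by (rule CollectI, rule exI[of _ "[:p:]"]) (simp add: map_poly_pCons)

lemma zero_B: "0 \<in> B n"
  using const_B[of 0 n] by simp

lemma gen_in_B: "gen_B n \<in> B n"
  unfolding B_eq by (rule CollectI, rule exI[of _ "[:0,1:]"]) (simp add: map_poly_pCons)

lemma rigid_aux:
  fixes \<delta> :: "'a::field poly poly fract \<Rightarrow> int"
  assumes n: "n \<ge> 1" and nd: "nonneg_degree_function (B n) \<delta>"
  shows "\<forall>r\<in>B n. r \<noteq> 0 \<longrightarrow> \<delta> r = 0"
proof -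
  interpret ddf "B n" \<delta> by (rule B_ddf[OF nd])
  obtain m where nm: "n = Suc m" using n by (cases n) auto
  define X :: "'a poly poly fract" where "X = to_fract var_x"
  define Y :: "'a poly poly fract" where "Y = to_fract var_y"
  define g :: "'a poly poly fract" where "g = gen_B n"
  have XR: "X \<in> B n" and YR: "Y \<in> B n" and gR: "g \<in> B n"
    unfolding X_def Y_def g_def by (simp_all add: const_B gen_in_B)
  have X0: "X \<noteq> 0" unfolding X_def var_x_def by simp
  have Y0: "Y \<noteq> 0" unfolding Y_def var_y_def by simp
  have px: "poly (poly (var_x - 1) 0) 0 = (-1::'a)" by (simp add: var_x_def)
  have X1p: "var_x - 1 \<noteq> (0::'a poly poly)" using px by auto
  have X1: "X - 1 \<noteq> 0" using X1p unfolding X_def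
    by (metis to_fract_1 to_fract_diff to_fract_eq_0_iff)
  have py: "poly var_y 0 = (0::'a poly)" by (simp add: var_y_def)
  have pD: "poly (var_x ^ n * var_y - 1) 0 = (-1::'a poly)"
    by (simp only: poly_diff poly_mult poly_1 py) simp
  have Dp0: "var_x ^ n * var_y - 1 \<noteq> (0::'a poly poly)"
  proof
    assume h: "(var_x ^ n * var_y - 1 :: 'a poly poly) = 0"
    have "poly (var_x ^ n * var_y - 1 :: 'a poly poly) 0 = 0" by (simp only: h poly_0)
    with pD show False by (metis one_neq_zero neg_equal_0_iff_equal)
  qed
  have D0: "X ^ Suc m * Y - 1 \<noteq> 0" using Dp0 unfolding X_def Y_def nm
    by (metis to_fract_1 to_fract_diff to_fract_eq_0_iff to_fract_mult to_fract_power)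
  have pE: "poly (1 - var_x ^ m * var_y) 0 = (1::'a poly)"
    by (simp only: poly_diff poly_mult poly_1 py) simp
  have Ep0: "1 - var_x ^ m * var_y \<noteq> (0::'a poly poly)"
  proof
    assume h: "(1 - var_x ^ m * var_y :: 'a poly poly) = 0"
    have "poly (1 - var_x ^ m * var_y :: 'a poly poly) 0 = 0" by (simp only: h poly_0)
    with pE show False by (metis one_neq_zero)
  qed
  have E0: "1 - X ^ m * Y \<noteq> 0" using Ep0 unfolding X_def Y_def
    by (metis to_fract_1 to_fract_diff to_fract_eq_0_iff to_fract_mult to_fract_power)
  have E1: "g * (X ^ Suc m * Y - 1) = X - 1"
  proof -
    have "X ^ Suc m * Y - 1 = to_fract (var_x ^ n * var_y - 1)"
      unfolding X_def Y_def nm by (simp add: to_fract_power)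
    moreover have "to_fract (var_x - 1) = X - 1" unfolding X_def by simp
    moreover have "g = to_fract (var_x - 1) / to_fract (var_x ^ n * var_y - 1)"
      unfolding g_def gen_B_def by (simp only: Fract_conv_to_fract)
    moreover have "to_fract (var_x ^ n * var_y - 1) \<noteq> (0::'a poly poly fract)"
      by (metis Dp0 to_fract_eq_0_iff)
    moreover have "\<And>a b::'a poly poly fract. b \<noteq> 0 \<Longrightarrow> a / b * b = a" by simp
    ultimately show ?thesis by metis
  qed
  have E2: "(g * X ^ m * Y - 1) * (X ^ Suc m * Y - 1) = 1 - X ^ m * Y"
  proof -
    have "(g * X ^ m * Y - 1) * (X ^ Suc m * Y - 1) = X ^ m * Y * (g * (X ^ Suc m * Y - 1)) - (X ^ Suc m * Y - 1)"
      by (simp add: algebra_simps)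
    also have "\<dots> = X ^ m * Y * (X - 1) - (X ^ Suc m * Y - 1)" using E1 by simp
    also have "\<dots> = 1 - X ^ m * Y" by (simp add: algebra_simps)
    finally show ?thesis .
  qed
  have dd: "\<delta> X = 0 \<and> \<delta> Y = 0 \<and> \<delta> g = 0"
    by (rule main[OF XR YR gR X0 Y0 X1 D0 E0 E1 E2])
  have gX: "good X" and gY: "good Y" and gg: "good g"
    using dd XR YR gR unfolding good_def by auto
  have gc: "good (to_fract [:[:c:]:])" for c :: 'a
  proof (cases "c = 0")
    case True then show ?thesis unfolding good_def using zero_B by simp
  next
    case False
    have "to_fract [:[:c:]:] * to_fract [:[:inverse c:]:] = (1 :: 'a poly poly fract)"
    proof -
      have o: "[:[:1:]:] = (1::'a poly poly)" by (simp add: one_pCons)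
      show ?thesis using False by (simp flip: to_fract_mult add: o)
    qed
    then have "\<delta> (to_fract [:[:c:]:]) = 0" by (rule unit[OF const_B const_B])
    then show ?thesis unfolding good_def using const_B by simp
  qed
  have gb: "good (to_fract [:b:])" for b :: "'a poly"
  proof (induction b)
    case (pCons c b)
    have "[:pCons c b:] = [:[:c:]:] + var_x * [:b:]" by (simp add: var_x_def)
    then have "to_fract [:pCons c b:] = to_fract [:[:c:]:] + X * to_fract [:b:]"
      by (metis X_def to_fract_add to_fract_mult)
    then show ?case using gc gX pCons.IH good_add good_mul by simp
  qed (simp add: good_def zero_B)
  have gp: "good (to_fract p)" for p :: "'a poly poly"
  proof (induction p)
    case (pCons b p)
    have "pCons b p = [:b:] + var_y * p" by (simp add: var_y_def)
    then have "to_fract (pCons b p) = to_fract [:b:] + Y * to_fract p"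
      by (metis Y_def to_fract_add to_fract_mult)
    then show ?case using gb gY pCons.IH good_add good_mul by simp
  qed (simp add: good_def zero_B)
  have gP: "good (poly (fract_poly P) g)" for P
  proof (induction P)
    case (pCons a P)
    have "poly (fract_poly (pCons a P)) g = to_fract a + g * poly (fract_poly P) g"
      by (simp add: map_poly_pCons)
    then show ?case using gp gg pCons.IH good_add good_mul by simp
  qed (simp add: good_def zero_B)
  show ?thesis
  proof (intro ballI impI)
    fix r :: "'a poly poly fract" assume r: "r \<in> B n" "r \<noteq> 0"
    then obtain P where "r = poly (fract_poly P) g" unfolding B_eq g_def by auto
    then have "good r" using gP by simp
    then show "\<delta> r = 0" using r pos unfolding good_def by force
  qed
qed

theorem theorem4p2:
  fixes n :: nat
  assumes "n \<ge> 1"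
  shows "degree_rigid (B n :: 'a::field poly poly fract set)"
  unfolding degree_rigid_def using rigid_aux[OF assms] by blast

end
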